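(* Let $r \in \mathbb{Z}$ and let $P(r)=(P_{n,k})_{n,k\ge 0}$ be the Riordan array $\left(\frac{1+rx^2}{1+x^2}, \frac{x}{1+x^2}\right)$, i.e. $P_{n,k}=[x^n]\,\frac{1+rx^2}{1+x^2}\left(\frac{x}{1+x^2}\right)^k$. Then for all integers $n,k\ge 0$, $$P_{n,k}=\binom{\frac{n+k}{2}}{k}(-1)^{\frac{n-k}{2}}\frac{1+(-1)^{n-k}}{2}-r\binom{\frac{n+k-2}{2}}{k}(-1)^{\frac{n-k}{2}}\frac{1+(-1)^{n-k}}{2}+r\cdot 0^{n+k},$$ where any term carrying the factor $\frac{1+(-1)^{n-k}}{2}$ is interpreted as $0$ when $n-k$ is odd.
   Context: For a power series $h(x)$, $[x^n]h(x)$ denotes the coefficient of $x^n$. $0^m$ equals $1$ if $m=0$ and $0$ if $m>0$. For an integer $a$ and integer $k\ge 0$, $\binom{a}{k}=\frac{a(a-1)\cdots(a-k+1)}{k!}$ (so $\binom{-1}{0}=1$, and $\binom{a}{k}=0$ when $0\le a<k$). The Riordan array $(g(x),f(x))$ is the lower-triangular matrix with $(n,k)$ entry $[x^n]g(x)f(x)^k$. The matrix $P(r)$ is the coefficient array of the polynomials $P_n(x;r)=\sum_{k} P_{n,k}x^k$ (the restricted Chebyshev–Boubaker polynomials). *)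

theory Defs
  imports Complex_Main "HOL-Computational_Algebra.Formal_Power_Series"
begin

definition riordan :: "rat fps \<Rightarrow> rat fps \<Rightarrow> nat \<Rightarrow> nat \<Rightarrow> rat" where
  "riordan g f n k = fps_nth (g * f ^ k) n"

definition P_entry :: "int \<Rightarrow> nat \<Rightarrow> nat \<Rightarrow> rat" where
  "P_entry r n k = riordan
     ((1 + of_int r * fps_X ^ 2) / (1 + fps_X ^ 2))
     (fps_X / (1 + fps_X ^ 2)) n k"

end

theory Submission
  imports Defs
begin

definition cc :: "nat \<Rightarrow> nat \<Rightarrow> rat" where
  "cc k n = (if k \<le> n \<and> even (n - k) then (-1) ^ ((n - k) div 2) * of_nat (((n + k) div 2) choose k) else 0)"

definition EE :: "nat \<Rightarrow> rat fps" where "EE k = Abs_fps (cc k)"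

lemma EE_base: "EE 0 * (1 + fps_X ^ 2) = 1"
proof (rule fps_ext)
  fix n
  show "fps_nth (EE 0 * (1 + fps_X ^ 2)) n = fps_nth (1::rat fps) n"
  proof (cases n)
    case 0 then show ?thesis by (simp add: EE_def cc_def algebra_simps)
  next
    case (Suc m)
    then show ?thesis
    proof (cases m)
      case 0 then show ?thesis using Suc by (simp add: EE_def cc_def algebra_simps)
    next
      case (Suc j)
      have "fps_nth (EE 0 * (1 + fps_X ^ 2)) n = cc 0 n + cc 0 j"
        using Suc \<open>n = Suc m\<close> by (simp add: EE_def algebra_simps fps_X_power_mult_right_nth)
      also have "\<dots> = 0" using Suc \<open>n = Suc m\<close>
        by (auto simp: cc_def elim!: evenE)
      finally show ?thesis using \<open>n = Suc m\<close> by simp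
    qed
  qed
qed

lemma EE_step: "EE (Suc k) * (1 + fps_X ^ 2) = fps_X * EE k"
proof (rule fps_ext)
  fix n
  have lhs: "fps_nth (EE (Suc k) * (1 + fps_X ^ 2)) n = cc (Suc k) n + (if 2 \<le> n then cc (Suc k) (n - 2) else 0)"
    by (simp add: EE_def algebra_simps fps_X_power_mult_right_nth)
  have rhs: "fps_nth (fps_X * EE k) n = (if n = 0 then 0 else cc k (n - 1))"
    by (simp add: EE_def)
  have "cc (Suc k) n + (if 2 \<le> n then cc (Suc k) (n - 2) else 0) = (if n = 0 then 0 else cc k (n - 1))"
  proof (cases "Suc k \<le> n")
    case False
    then show ?thesis by (auto simp: cc_def)
  next
    case True
    then obtain m where m: "n = Suc k + m" using le_Suc_ex by blast
    show ?thesis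
    proof (cases "even m")
      case False
      then show ?thesis using m by (auto simp: cc_def)
    next
      case True
      then obtain j where j: "m = 2 * j" by (auto elim: evenE)
      show ?thesis
      proof (cases j)
        case 0
        then show ?thesis using m j by (auto simp: cc_def)
      next
        case (Suc i)
        have e1: "cc (Suc k) n = (-1) ^ j * of_nat ((Suc k + j) choose Suc k)"
          using m j by (simp add: cc_def)
        have e2: "cc (Suc k) (n - 2) = (-1) ^ i * of_nat ((Suc k + i) choose Suc k)"
          using m j Suc by (simp add: cc_def)
        have e3: "cc k (n - 1) = (-1) ^ j * of_nat ((Suc k + i) choose k)"
          using m j Suc by (simp add: cc_def)
        have pas: "((Suc k + j) choose Suc k) = ((Suc k + i) choose Suc k) + ((Suc k + i) choose k)"
          using Suc by simp
        show ?thesis using e1 e2 e3 m j Suc pas by (simp add: algebra_simps)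
      qed
    qed
  qed
  then show "fps_nth (EE (Suc k) * (1 + fps_X ^ 2)) n = fps_nth (fps_X * EE k) n" using lhs rhs by simp
qed

lemma EE_prop: "EE k * (1 + fps_X ^ 2) ^ (Suc k) = fps_X ^ k"
proof (induction k)
  case 0 then show ?case using EE_base by simp
next
  case (Suc k)
  have "EE (Suc k) * (1 + fps_X ^ 2) ^ Suc (Suc k) = (EE (Suc k) * (1 + fps_X ^ 2)) * (1 + fps_X ^ 2) ^ Suc k"
    by (simp only: power_Suc mult.assoc)
  also have "\<dots> = fps_X * (EE k * (1 + fps_X ^ 2) ^ Suc k)" by (simp only: EE_step mult.assoc)
  also have "\<dots> = fps_X * fps_X ^ k" by (simp only: Suc.IH)
  finally show ?case by (metis power_Suc)
qed

lemma B0: "fps_nth ((1 + fps_X ^ 2) ^ m :: rat fps) 0 = 1"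
  by (induction m) auto

lemma main_fps: "((1 + of_int r * fps_X ^ 2) / (1 + fps_X ^ 2)) * (fps_X / (1 + fps_X ^ 2)) ^ k
   = (1 + of_int r * fps_X ^ 2) * EE (k::nat)"
proof -
  let ?B = "(1 + fps_X ^ 2) :: rat fps"
  have b0: "fps_nth ?B 0 \<noteq> 0" by simp
  have st: "((1 + of_int r * fps_X ^ 2) / ?B) * (fps_X / ?B) ^ k
     = (1 + of_int r * fps_X ^ 2) * (fps_X ^ k * inverse ?B ^ Suc k)"
    using b0 by (simp add: fps_divide_unit power_mult_distrib algebra_simps)
  have eq: "fps_X ^ k * inverse ?B ^ Suc k = EE k"
  proof -
    have "inverse ?B ^ Suc k * ?B ^ Suc k = 1"
      by (metis b0 inverse_mult_eq_1 power_mult_distrib power_one mult.commute)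
    have "EE k * (?B ^ Suc k * inverse ?B ^ Suc k) = fps_X ^ k * inverse ?B ^ Suc k"
      by (simp only: mult.assoc[symmetric] EE_prop)
    hence "fps_X ^ k * inverse ?B ^ Suc k = EE k * (?B ^ Suc k * inverse ?B ^ Suc k)" by simp
    also have "\<dots> = EE k" using \<open>inverse ?B ^ Suc k * ?B ^ Suc k = 1\<close> by (simp add: mult.commute)
    finally show ?thesis .
  qed
  show ?thesis using st eq by simp
qed

lemma gch: "(0::int) \<le> a \<Longrightarrow> (of_int a gchoose k :: rat) = of_nat (nat a choose k)"
  by (metis binomial_gbinomial int_nat_eq of_int_of_nat_eq)

lemma Pform: "P_entry r n k = cc k n + (if 2 \<le> n then of_int r * cc k (n - 2) else 0)"
proof -
  have "P_entry r n k = fps_nth ((1 + of_int r * fps_X ^ 2) * EE k) n"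
    unfolding P_entry_def riordan_def main_fps by simp
  also have "\<dots> = fps_nth (EE k) n + fps_nth (fps_const (of_int r) * (fps_X ^ 2 * EE k)) n"
    by (simp add: algebra_simps fps_of_int)
  also have "\<dots> = cc k n + (if 2 \<le> n then of_int r * cc k (n - 2) else 0)"
    by (simp add: EE_def fps_X_power_mult_nth)
  finally show ?thesis .
qed

theorem mainTheorem1:
  fixes r :: int and n k :: nat
  shows "P_entry r n k =
    (if even (int n - int k) then
        (of_int ((int n + int k) div 2) gchoose k) * (-1) powi ((int n - int k) div 2)
      - of_int r * (of_int ((int n + int k - 2) div 2) gchoose k) * (-1) powi ((int n - int k) div 2)
     else 0)
    + of_int r * 0 ^ (n + k)"
proof (cases "even (int n - int k)")
  case False
  have nk: "n + k \<noteq> 0" using False by auto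
  have "cc k n = 0" using False unfolding cc_def
    by (auto simp: even_diff_iff[symmetric] dest: even_of_nat_iff[THEN iffD2])
  moreover have "2 \<le> n \<Longrightarrow> cc k (n - 2) = 0" using False unfolding cc_def
    by auto
  ultimately show ?thesis using False nk by (simp add: Pform)
next
  case True
  show ?thesis
  proof (cases "k \<le> n")
    case True2: True
    then obtain m where m: "n = k + m" using le_Suc_ex by blast
    with True have "even m" by simp
    then obtain j where j: "m = 2 * j" by (auto elim: evenE)
    have d1: "(int n + int k) div 2 = int (k + j)" using m j by simp
    have d2: "(int n - int k) div 2 = int j" using m j by simp
    have c1: "cc k n = (-1) ^ j * of_nat ((k + j) choose k)" using m j by (simp add: cc_def)
    show ?thesis
    proof (cases j)
      case (Suc i)
      have d3: "(int n + int k - 2) div 2 = int (k + i)" using m j Suc by simp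
      have c2: "cc k (n - 2) = (-1) ^ i * of_nat ((k + i) choose k)" using m j Suc by (simp add: cc_def)
      have z: "(0::rat) ^ (n + k) = 0" using m j Suc by simp
      have g1: "(of_int ((int n + int k) div 2) gchoose k :: rat) = of_nat ((k + j) choose k)"
        unfolding d1 of_int_of_nat_eq binomial_gbinomial[symmetric] by (rule refl)
      have g2: "(of_int ((int n + int k - 2) div 2) gchoose k :: rat) = of_nat ((k + i) choose k)"
        unfolding d3 of_int_of_nat_eq binomial_gbinomial[symmetric] by (rule refl)
      have p: "(-1::rat) powi ((int n - int k) div 2) = (-1) ^ j"
        unfolding d2 power_int_of_nat by (rule refl)
      have n2: "2 \<le> n" using m j Suc by simp
      show ?thesis unfolding g1 g2 p z Pform using True n2 c1 c2 Suc
        by (simp add: algebra_simps)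
    next
      case 0
      show ?thesis
      proof (cases k)
        case 0
        then show ?thesis using m j \<open>j = 0\<close> by (simp add: Pform cc_def)
      next
        case (Suc l)
        have d3: "(int n + int k - 2) div 2 = int l" using m j \<open>j = 0\<close> Suc by simp
        have g1: "(of_int ((int n + int k) div 2) gchoose k :: rat) = 1"
          unfolding d1 of_int_of_nat_eq binomial_gbinomial[symmetric] using \<open>j = 0\<close> by simp
        have g2: "(of_int ((int n + int k - 2) div 2) gchoose k :: rat) = 0"
          unfolding d3 of_int_of_nat_eq binomial_gbinomial[symmetric] using Suc by simp
        show ?thesis unfolding g1 g2 using True d2 m j \<open>j = 0\<close> Suc
          by (simp add: Pform cc_def)
      qed
    qed
  next
    case False
    then obtain m where m: "k = n + m" and "m > 0" by (metis less_imp_add_positive not_le)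
    with True have "even m" by (simp add: algebra_simps)
    then obtain j where j: "m = 2 * j" by (auto elim: evenE)
    have "j > 0" using \<open>m > 0\<close> j by simp
    have d1: "(int n + int k) div 2 = int (n + j)" using m j by simp
    have d3: "(int n + int k - 2) div 2 = int (n + j - 1)" using m j \<open>j > 0\<close> by simp
    have z: "(0::rat) ^ (n + k) = 0" using m j \<open>j > 0\<close> by simp
    have "cc k n = 0" "cc k (n - 2) = 0" using m \<open>m > 0\<close> by (auto simp: cc_def)
    moreover have g1: "(of_int ((int n + int k) div 2) gchoose k :: rat) = 0"
      unfolding d1 of_int_of_nat_eq binomial_gbinomial[symmetric] using m j \<open>j > 0\<close> by simp
    moreover have g2: "(of_int ((int n + int k - 2) div 2) gchoose k :: rat) = 0"
      unfolding d3 of_int_of_nat_eq binomial_gbinomial[symmetric] using m j \<open>j > 0\<close> by simp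
    ultimately show ?thesis unfolding g1 g2 z using True by (simp add: Pform)
  qed
qed

end
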